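(* Let $V$ be a real vector space and $X\subseteq V$. If $X$ contains convexly independent subsets of arbitrarily large finite size, then $X$ contains an infinite convexly independent subset.
   Context: A subset $Y\subseteq V$ is convexly independent if $y\notin\mathrm{conv}(Y\setminus\{y\})$ for every $y\in Y$, where $\mathrm{conv}$ denotes the convex hull. *)

theory Defs
  imports "HOL-Analysis.Analysis"
begin

definition convexly_independent :: "'a::real_vector set \<Rightarrow> bool" where
  "convexly_independent Y \<longleftrightarrow> (\<forall>y\<in>Y. y \<notin> convex hull (Y - {y}))"

end

theory Submission
  imports Defs "HOL-Library.Ramsey"
begin

lemma exists_functional:
  fixes S :: "'a::real_vector set"
  assumes cS: "countable S" and S0: "0 \<notin> S"
  shows "\<exists>l::'a\<Rightarrow>real. linear l \<and> (\<forall>v\<in>S. l v \<noteq> 0)"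
proof -
  define B where "B = extend_basis ({}::'a set)"
  have indB: "independent B" and spB: "span B = UNIV"
    unfolding B_def using real_vector.independent_extend_basis[of "{}"] real_vector.span_extend_basis[of "{}"] real_vector.independent_empty by auto
  define R where "R v = {b. representation B v b \<noteq> 0}" for v
  have finR: "finite (R v)" for v unfolding R_def by (rule real_vector.finite_representation)
  have RB: "R v \<subseteq> B" for v unfolding R_def using real_vector.representation_ne_zero by blast
  have vsum: "(\<Sum>b\<in>R v. representation B v b *\<^sub>R b) = v" for v
    unfolding R_def using real_vector.sum_nonzero_representation_eq[OF indB] spB by auto
  define C where "C = (\<Union>v\<in>S. R v)"
  have cC: "countable C" unfolding C_def using cS finR by (intro countable_UN) (auto intro: countable_finite)
  define h where "h = to_nat_on C"
  have injh: "inj_on h C" unfolding h_def using cC by (rule inj_on_to_nat_on)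
  define P where "P t v = (\<Sum>b\<in>R v. representation B v b * t ^ h b)" for t :: real and v
  have finroots: "finite {t. P t v = 0}" if vS: "v \<in> S" for v
  proof -
    have "R v \<noteq> {}" using vsum[of v] S0 vS by auto
    then obtain b0 where b0: "b0 \<in> R v" by auto
    define N where "N = Max (h ` R v)"
    define d where "d i = (\<Sum>b\<in>{b. b \<in> R v \<and> h b = i}. representation B v b)" for i
    have eq: "P t v = (\<Sum>i\<le>N. d i * t ^ i)" for t
    proof -
      have "(\<Sum>i\<le>N. d i * t ^ i) = (\<Sum>i\<le>N. (\<Sum>b\<in>{b. b \<in> R v \<and> h b = i}. representation B v b * t ^ h b))"
        unfolding d_def sum_distrib_right by (intro sum.cong refl) auto
      also have "\<dots> = P t v" unfolding P_def
        by (rule sum.group) (use finR in \<open>auto simp: N_def\<close>)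
      finally show ?thesis by simp
    qed
    have RC: "R v \<subseteq> C" unfolding C_def using vS by auto
    have "{b. b \<in> R v \<and> h b = h b0} = {b0}" using b0 RC injh by (auto dest: inj_onD)
    then have "d (h b0) = representation B v b0" unfolding d_def by simp
    then have "d (h b0) \<noteq> 0" using b0 unfolding R_def by simp
    moreover have "h b0 \<le> N" unfolding N_def using finR b0 by auto
    ultimately have "finite {t. (\<Sum>i\<le>N. d i * t ^ i) = 0}" by (intro polyfun_roots_finite)
    then show ?thesis using eq by simp
  qed
  have "countable (\<Union>v\<in>S. {t. P t v = 0})"
    using cS finroots by (intro countable_UN) (auto intro: countable_finite)
  then obtain t where t: "t \<notin> (\<Union>v\<in>S. {t. P t v = 0})"
    using uncountable_UNIV_real by (metis UNIV_I countable_subset subsetI)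
  define f where "f b = (if b \<in> C then t ^ h b else 0)" for b
  obtain l :: "'a \<Rightarrow> real" where l: "linear l" "\<forall>x\<in>B. l x = f x"
    using real_vector.linear_independent_extend[OF indB] by blast
  have "l v = P t v" if vS: "v \<in> S" for v
  proof -
    have RC: "R v \<subseteq> C" unfolding C_def using vS by auto
    have "l v = l (\<Sum>b\<in>R v. representation B v b *\<^sub>R b)" using vsum[of v] by simp
    also have "\<dots> = (\<Sum>b\<in>R v. representation B v b * l b)"
      using l(1) by (simp add: linear_sum linear_cmul)
    also have "\<dots> = P t v" unfolding P_def
    proof (intro sum.cong refl)
      fix b assume "b \<in> R v"
      then have "b \<in> B" "b \<in> C" using RB RC by auto
      then show "representation B v b * l b = representation B v b * t ^ h b"
        using l(2) by (simp add: f_def)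
    qed
    finally show ?thesis .
  qed
  then show ?thesis using l(1) t by auto
qed

lemma expose:
  fixes g :: "'a::real_vector \<Rightarrow> real"
  assumes lg: "linear g" and lt: "\<forall>z\<in>Y - {y}. g y < g z"
  shows "y \<notin> convex hull (Y - {y})"
proof
  assume y: "y \<in> convex hull (Y - {y})"
  have cv: "convex (g -` {g y<..})"
    by (intro convex_linear_vimage lg) simp
  have "Y - {y} \<subseteq> g -` {g y<..}" using lt by auto
  then have "convex hull (Y - {y}) \<subseteq> g -` {g y<..}" using cv by (rule hull_minimal)
  then show False using y by auto
qed

lemma lin_comb:
  fixes l1 l2 :: "'a::real_vector \<Rightarrow> real"
  assumes "linear l1" "linear l2"
  shows "linear (\<lambda>v. a * l2 v - b * l1 v)"
  by (rule linearI) (simp_all add: linear_add[OF assms(1)] linear_add[OF assms(2)]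
      linear_scale[OF assms(1)] linear_scale[OF assms(2)] algebra_simps)

lemma chain_ci:
  fixes q :: "nat \<Rightarrow> 'a::real_vector" and l1 l2 :: "'a \<Rightarrow> real"
  assumes l1: "linear l1" and l2: "linear l2"
   and xinc: "\<And>i j. i < j \<Longrightarrow> l1 (q i) < l1 (q j)"
   and Dpos: "\<And>i j k. i < j \<Longrightarrow> j < k \<Longrightarrow>
      (l1 (q j) - l1 (q i)) * (l2 (q k) - l2 (q i)) - (l2 (q j) - l2 (q i)) * (l1 (q k) - l1 (q i)) > 0"
  shows "convexly_independent (range q)"
proof -
  define x where "x i = l1 (q i)" for i
  define y where "y i = l2 (q i)" for i
  define sl where "sl i j = (y j - y i) / (x j - x i)" for i j
  have xi: "x i < x j" if "i < j" for i j using xinc[OF that] unfolding x_def .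
  have key: "(y j - y i) * (x k - x j) < (y k - y j) * (x j - x i)" if "i<j" "j<k" for i j k
    using Dpos[OF that] unfolding x_def[symmetric] y_def[symmetric] by (simp add: algebra_simps)
  have M1: "sl i j < sl j k" if "i<j" "j<k" for i j k
    using key[OF that] xi[OF that(1)] xi[OF that(2)] by (simp add: sl_def field_simps)
  have M2: "sl i j < sl i k \<and> sl i k < sl j k" if "i<j" "j<k" for i j k
    using key[OF that] xi[OF that(1)] xi[OF that(2)] xi[of i k] that by (simp add: sl_def field_simps)
  have slmul: "y j - y i = sl i j * (x j - x i)" if "i < j" for i j
    using xi[OF that] by (simp add: sl_def)
  have injq: "inj q"
  proof (rule injI)
    fix a b assume "q a = q b"
    then show "a = b" using xi[of a b] xi[of b a] unfolding x_def
      by (metis less_irrefl linorder_neqE_nat)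
  qed
  show ?thesis unfolding convexly_independent_def
  proof
    fix z assume "z \<in> range q"
    then obtain j where zj: "z = q j" by auto
    define s where "s = (if j = 0 then sl 0 1 - 1 else (sl (j-1) j + sl j (j+1)) / 2)"
    have A: "s < sl j i" if "j < i" for i
    proof -
      have "sl j (j+1) \<le> sl j i"
        using M2[of j "j+1" i] that by (cases "i = j+1") auto
      moreover have "s < sl j (j+1)"
        using M1[of "j-1" j "j+1"] by (cases "j = 0") (auto simp: s_def)
      ultimately show ?thesis by simp
    qed
    have B: "sl i j < s" if "i < j" for i
    proof -
      have "sl i j \<le> sl (j-1) j"
      proof (cases "i = j-1")
        case False
        then have "i < j-1" using that by simp
        then show ?thesis using M2[of i "j-1" j] that by simp
      qed simp
      moreover have "sl (j-1) j < s"
        using M1[of "j-1" j "j+1"] that by (auto simp: s_def)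
      ultimately show ?thesis by simp
    qed
    define g where "g v = 1 * l2 v - s * l1 v" for v
    have lg: "linear g" unfolding g_def by (rule lin_comb[OF l1 l2])
    have "\<forall>w\<in>range q - {z}. g z < g w"
    proof
      fix w assume "w \<in> range q - {z}"
      then obtain i where wi: "w = q i" and ij: "i \<noteq> j" using zj by auto
      have gd: "g w - g z = (y i - y j) - s * (x i - x j)"
        unfolding g_def wi zj x_def y_def by (simp add: algebra_simps)
      show "g z < g w"
      proof (cases "i < j")
        case True
        have "g w - g z = (x j - x i) * (s - sl i j)"
          using gd slmul[OF True] by (simp add: algebra_simps)
        moreover have "0 < (x j - x i) * (s - sl i j)"
          using xi[OF True] B[OF True] by simp
        ultimately show ?thesis by simp
      next
        case False
        then have ji: "j < i" using ij by simp
        have "g w - g z = (x i - x j) * (sl j i - s)"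
          using gd slmul[OF ji] by (simp add: algebra_simps)
        moreover have "0 < (x i - x j) * (sl j i - s)"
          using xi[OF ji] A[OF ji] by simp
        ultimately show ?thesis by simp
      qed
    qed
    then show "z \<notin> convex hull (range q - {z})" by (rule expose[OF lg])
  qed
qed

lemma seg_param:
  fixes a d :: "'a::real_vector"
  assumes "r < s" "s < t"
  shows "a + s *\<^sub>R d \<in> convex hull {a + r *\<^sub>R d, a + t *\<^sub>R d}"
proof -
  define u where "u = (s - r) / (t - r)"
  have u0: "0 \<le> u" "u \<le> 1" using assms by (auto simp: u_def field_simps)
  have ut: "u * (t - r) = s - r" using assms by (simp add: u_def)
  have e: "(1 - u) * r + u * t = s" using ut by (simp add: algebra_simps)
  have "(1 - u) *\<^sub>R (a + r *\<^sub>R d) + u *\<^sub>R (a + t *\<^sub>R d) = a + ((1 - u) * r + u * t) *\<^sub>R d"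
    by (simp add: algebra_simps)
  then have "a + s *\<^sub>R d = (1 - u) *\<^sub>R (a + r *\<^sub>R d) + u *\<^sub>R (a + t *\<^sub>R d)"
    using e by simp
  then show ?thesis unfolding convex_hull_2 using u0 by force
qed

lemma three_param:
  fixes a d :: "'a::real_vector"
  assumes "r \<noteq> s" "s \<noteq> t" "r \<noteq> t"
  shows "a + r *\<^sub>R d \<in> convex hull {a + s *\<^sub>R d, a + t *\<^sub>R d} \<or>
         a + s *\<^sub>R d \<in> convex hull {a + r *\<^sub>R d, a + t *\<^sub>R d} \<or>
         a + t *\<^sub>R d \<in> convex hull {a + r *\<^sub>R d, a + s *\<^sub>R d}"
proof -
  have "r < s \<and> s < t \<or> t < s \<and> s < r \<or> s < r \<and> r < t \<or> t < r \<and> r < s \<or> r < t \<and> t < s \<or> s < t \<and> t < r"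
    using assms by linarith
  then show ?thesis
    using seg_param[of r s t a d] seg_param[of t s r a d] seg_param[of s r t a d]
      seg_param[of t r s a d] seg_param[of r t s a d] seg_param[of s t r a d]
    by (auto simp: insert_commute)
qed

lemma three_on_line:
  fixes a b :: "'a::real_vector"
  assumes "x \<in> affine hull {a,b}" "y \<in> affine hull {a,b}" "z \<in> affine hull {a,b}"
    and "x \<noteq> y" "y \<noteq> z" "x \<noteq> z"
  shows "x \<in> convex hull {y,z} \<or> y \<in> convex hull {x,z} \<or> z \<in> convex hull {x,y}"
proof -
  have par: "\<exists>s. w = a + s *\<^sub>R (b - a)" if wA: "w \<in> affine hull {a,b}" for w
  proof -
    obtain u v where "w = u *\<^sub>R a + v *\<^sub>R b" "u + v = 1" using wA unfolding affine_hull_2 by blast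
    then have "w = a + v *\<^sub>R (b - a)" by (simp add: algebra_simps flip: scaleR_add_left)
    then show ?thesis by blast
  qed
  obtain r s t where "x = a + r *\<^sub>R (b - a)" "y = a + s *\<^sub>R (b - a)" "z = a + t *\<^sub>R (b - a)"
    using par assms(1-3) by metis
  then show ?thesis using three_param[of r s t a "b - a"] assms(4-6) by auto
qed

lemma ci_line_card:
  fixes Y :: "'a::real_vector set"
  assumes ci: "convexly_independent Y"
  shows "card (Y \<inter> affine hull {a,b}) \<le> 2"
proof (rule ccontr)
  assume "\<not> ?thesis"
  then have c3: "3 \<le> card (Y \<inter> affine hull {a,b})" by simp
  then have "finite (Y \<inter> affine hull {a,b})" by (metis card.infinite not_numeral_le_zero)
  then obtain T where T: "T \<subseteq> Y \<inter> affine hull {a,b}" "card T = 3"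
    using obtain_subset_with_card_n[OF c3] by metis
  then obtain x y z where xyz: "T = {x,y,z}" "x \<noteq> y" "y \<noteq> z" "x \<noteq> z"
    unfolding card_3_iff by auto
  have mem: "x \<in> Y" "y \<in> Y" "z \<in> Y" "x \<in> affine hull {a,b}" "y \<in> affine hull {a,b}" "z \<in> affine hull {a,b}"
    using T xyz by auto
  have nx: "x \<notin> convex hull {y,z}"
    using ci mem xyz hull_mono[of "{y,z}" "Y - {x}" convex] unfolding convexly_independent_def by blast
  have ny: "y \<notin> convex hull {x,z}"
    using ci mem xyz hull_mono[of "{x,z}" "Y - {y}" convex] unfolding convexly_independent_def by blast
  have nz: "z \<notin> convex hull {x,y}"
    using ci mem xyz hull_mono[of "{x,y}" "Y - {z}" convex] unfolding convexly_independent_def by blast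
  show False using three_on_line[OF mem(4-6) xyz(2-4)] nx ny nz by blast
qed

definition bad :: "'a::real_vector set \<Rightarrow> 'a set" where
  "bad F = F \<union> (\<Union>a\<in>F. \<Union>b\<in>F. affine hull {a,b})"

lemma avoid:
  fixes X :: "'a::real_vector set"
  assumes H: "\<forall>n::nat. \<exists>Y. Y \<subseteq> X \<and> finite Y \<and> card Y \<ge> n \<and> convexly_independent Y"
    and fF: "finite F"
  shows "\<exists>x\<in>X. x \<notin> bad F"
proof (rule ccontr)
  assume "\<not> ?thesis"
  then have XF: "X \<subseteq> bad F" by auto
  obtain Y where Y: "Y \<subseteq> X" "finite Y" "card Y \<ge> card F + 2 * card (F \<times> F) + 1"
    and ci: "convexly_independent Y"
    using H by blast
  define U where "U = (\<Union>p\<in>F \<times> F. Y \<inter> affine hull {fst p, snd p})"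
  have sub: "Y \<subseteq> F \<union> U" using XF Y(1) unfolding U_def bad_def by force
  have fU: "finite U" unfolding U_def using fF Y(2) by auto
  have "card Y \<le> card (F \<union> U)" using sub fF fU by (intro card_mono) auto
  also have "\<dots> \<le> card F + card U" by (rule card_Un_le)
  also have "card U \<le> (\<Sum>p\<in>F \<times> F. card (Y \<inter> affine hull {fst p, snd p}))"
    unfolding U_def by (rule card_UN_le) (use fF in auto)
  also have "\<dots> \<le> (\<Sum>p\<in>F \<times> F. 2)" by (intro sum_mono ci_line_card[OF ci])
  also have "\<dots> = 2 * card (F \<times> F)" by simp
  finally show False using Y(3) by simp
qed

fun sqL :: "'a::real_vector set \<Rightarrow> nat \<Rightarrow> 'a list" where
  "sqL X 0 = []"
| "sqL X (Suc n) = sqL X n @ [SOME x. x \<in> X \<and> x \<notin> bad (set (sqL X n))]"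

lemma lin_scale:
  fixes l :: "'a::real_vector \<Rightarrow> real"
  assumes "linear l"
  shows "linear (\<lambda>v. c * l v)"
  by (rule linearI) (simp_all add: linear_add[OF assms] linear_scale[OF assms] algebra_simps)

lemma sorted3: "(i::nat) < j \<Longrightarrow> j < k \<Longrightarrow> sorted_list_of_set {i,j,k} = [i,j,k]"
  by simp

theorem corollary5p3:
  fixes X :: "'a::real_vector set"
  assumes "\<forall>n::nat. \<exists>Y. Y \<subseteq> X \<and> finite Y \<and> card Y \<ge> n \<and> convexly_independent Y"
  shows "\<exists>Y. Y \<subseteq> X \<and> infinite Y \<and> convexly_independent Y"
proof -
  define p where "p n = (SOME x. x \<in> X \<and> x \<notin> bad (set (sqL X n)))" for n
  have len: "length (sqL X n) = n" for n by (induction n) auto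
  have nth: "i < n \<Longrightarrow> sqL X n ! i = p i" for i n
  proof (induction n)
    case (Suc n)
    then show ?case using len[of n] by (cases "i = n") (auto simp: nth_append p_def)
  qed simp
  have setq: "set (sqL X n) = p ` {..<n}" for n
    unfolding set_conv_nth len using nth by force
  have pn: "p n \<in> X \<and> p n \<notin> bad (p ` {..<n})" for n
  proof -
    have "\<exists>x. x \<in> X \<and> x \<notin> bad (set (sqL X n))" using avoid[OF assms, of "set (sqL X n)"] by auto
    then show ?thesis unfolding p_def[of n] setq[symmetric] by (rule someI_ex)
  qed
  have pX: "p n \<in> X" for n using pn by auto
  have pne: "p i \<noteq> p j" if "i < j" for i j
  proof
    assume "p i = p j"
    then have "p j \<in> p ` {..<j}" using that by (metis imageI lessThan_iff)
    then show False using pn[of j] unfolding bad_def by auto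
  qed
  have injp: "inj p"
  proof (rule injI)
    fix a b assume "p a = p b"
    then show "a = b" using pne[of a b] pne[of b a] by (metis linorder_neqE_nat)
  qed
  have pline: "p k \<notin> affine hull {p i, p j}" if "i < k" "j < k" for i j k
    using pn[of k] that unfolding bad_def by auto
  define S1 where "S1 = (\<lambda>(i,j). p j - p i) ` {(i,j). (i::nat) < j}"
  have "countable S1" unfolding S1_def by (intro countable_image) simp
  moreover have "0 \<notin> S1"
  proof
    assume "0 \<in> S1"
    then obtain i j where "i < j" "p j - p i = 0" unfolding S1_def by auto
    then show False using pne[of i j] by simp
  qed
  ultimately obtain l1 :: "'a \<Rightarrow> real" where l1: "linear l1" "\<forall>v\<in>S1. l1 v \<noteq> 0"
    using exists_functional by blast
  have l1ne: "l1 (p j) \<noteq> l1 (p i)" if "i < j" for i j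
  proof -
    have "p j - p i \<in> S1" unfolding S1_def using that by auto
    then have "l1 (p j - p i) \<noteq> 0" using l1(2) by blast
    then show ?thesis by (simp add: linear_diff[OF l1(1)])
  qed
  define zz where "zz i j k = l1 (p j - p i) *\<^sub>R (p k - p i) - l1 (p k - p i) *\<^sub>R (p j - p i)" for i j k
  define S2 where "S2 = (\<lambda>(i,j,k). zz i j k) ` {(i,j,k). (i::nat) < j \<and> j < k}"
  have "countable S2" unfolding S2_def by (intro countable_image) simp
  moreover have "0 \<notin> S2"
  proof
    assume "0 \<in> S2"
    then obtain i j k where ijk: "i < j" "j < k" and z0: "zz i j k = 0" unfolding S2_def by auto
    define \<alpha> where "\<alpha> = l1 (p j - p i)"
    have a0: "\<alpha> \<noteq> 0" using l1ne[OF ijk(1)] unfolding \<alpha>_def by (simp add: linear_diff[OF l1(1)])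
    define c where "c = l1 (p k - p i) / \<alpha>"
    have "\<alpha> *\<^sub>R (p k - p i) = (c * \<alpha>) *\<^sub>R (p j - p i)"
      using z0 a0 unfolding zz_def \<alpha>_def[symmetric] c_def by simp
    then have "p k - p i = c *\<^sub>R (p j - p i)" using a0
      by (metis mult.commute scaleR_scaleR scaleR_cancel_left)
    then have "p k = (1 - c) *\<^sub>R p i + c *\<^sub>R p j" by (simp add: algebra_simps)
    then have "p k \<in> affine hull {p i, p j}" unfolding affine_hull_2 by force
    then show False using pline[of i k j] ijk by auto
  qed
  ultimately obtain l2 :: "'a \<Rightarrow> real" where l2: "linear l2" "\<forall>v\<in>S2. l2 v \<noteq> 0"
    using exists_functional by blast
  define x where "x n = l1 (p n)" for n
  define y where "y n = l2 (p n)" for n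
  define D where "D i j k = (x j - x i) * (y k - y i) - (y j - y i) * (x k - x i)" for i j k
  have Dne: "D i j k \<noteq> 0" if "i < j" "j < k" for i j k
  proof -
    have "zz i j k \<in> S2" unfolding S2_def using that by (intro image_eqI[of _ _ "(i,j,k)"]) auto
    then have "l2 (zz i j k) \<noteq> 0" using l2 by auto
    moreover have "l2 (zz i j k) = D i j k"
      unfolding zz_def D_def x_def y_def
      by (simp only: linear_diff[OF l1(1)] linear_diff[OF l2(1)] linear_scale[OF l2(1)])
         (simp add: algebra_simps)
    ultimately show ?thesis by simp
  qed
  have xne: "x i \<noteq> x j" if "i < j" for i j using l1ne[OF that] unfolding x_def by simp
  define f where "f T = (let L = sorted_list_of_set T in
     (if x (L!0) < x (L!1) then 1 else 0) + (if D (L!0) (L!1) (L!2) > 0 then 2 else 0::nat))" for T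
  have "\<forall>T. T \<subseteq> (UNIV::nat set) \<and> finite T \<and> card T = 3 \<longrightarrow> f T < 4"
    unfolding f_def by (auto simp: Let_def)
  then obtain Y t where Y: "infinite Y" "t < 4"
    and hom: "\<forall>T. T \<subseteq> Y \<and> finite T \<and> card T = 3 \<longrightarrow> f T = t"
    using Ramsey[of "UNIV::nat set" 3 f 4] by auto
  define e where "e = enumerate Y"
  have emono: "e i < e j" if "i < j" for i j unfolding e_def using enumerate_mono[OF that Y(1)] .
  have eY: "e n \<in> Y" for n unfolding e_def using enumerate_in_set[OF Y(1)] .
  have ft: "f {e i, e j, e k} = t" if "i < j" "j < k" for i j k
  proof -
    have "e i < e j" "e j < e k" using emono that by auto
    then have "card {e i, e j, e k} = 3" by auto
    then show ?thesis using hom eY by auto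
  qed
  define cx where "cx = (t = 1 \<or> t = 3)"
  define cd where "cd = (t \<ge> 2)"
  have bits: "(x (e i) < x (e j)) = cx \<and> (D (e i) (e j) (e k) > 0) = cd" if "i < j" "j < k" for i j k
  proof -
    have ij: "e i < e j" "e j < e k" using emono that by auto
    have "f {e i, e j, e k} = (if x (e i) < x (e j) then 1 else 0) + (if D (e i) (e j) (e k) > 0 then 2 else 0)"
      unfolding f_def using sorted3[OF ij] by simp
    then show ?thesis using ft[OF that] Y(2) unfolding cx_def cd_def
      by (auto split: if_splits)
  qed
  define q where "q n = p (e n)" for n
  define s1 :: real where "s1 = (if cx then 1 else -1)"
  define sd :: real where "sd = (if cd then 1 else -1)"
  define L1 where "L1 v = s1 * l1 v" for v
  define L2 where "L2 v = (s1 * sd) * l2 v" for v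
  have ci: "convexly_independent (range q)"
  proof (rule chain_ci)
    show "linear L1" unfolding L1_def by (rule lin_scale[OF l1(1)])
    show "linear L2" unfolding L2_def by (rule lin_scale[OF l2(1)])
    show "L1 (q i) < L1 (q j)" if "i < j" for i j
    proof -
      have b: "(x (e i) < x (e j)) = cx" using bits[OF that, of "j+1"] by simp
      have "x (e i) \<noteq> x (e j)" using xne emono[OF that] by auto
      then show ?thesis using b unfolding L1_def q_def x_def s1_def by (cases cx) auto
    qed
    show "(L1 (q j) - L1 (q i)) * (L2 (q k) - L2 (q i)) - (L2 (q j) - L2 (q i)) * (L1 (q k) - L1 (q i)) > 0"
      if "i < j" "j < k" for i j k
    proof -
      have b: "(D (e i) (e j) (e k) > 0) = cd" using bits[OF that] by simp
      have "D (e i) (e j) (e k) \<noteq> 0" using Dne emono that by auto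
      then have pos: "sd * D (e i) (e j) (e k) > 0" using b unfolding sd_def by (cases cd) auto
      have ss: "s1 * s1 = 1" unfolding s1_def by auto
      have "(L1 (q j) - L1 (q i)) * (L2 (q k) - L2 (q i)) - (L2 (q j) - L2 (q i)) * (L1 (q k) - L1 (q i))
          = (s1 * s1) * sd * D (e i) (e j) (e k)"
        unfolding L1_def L2_def q_def D_def x_def y_def by (simp add: algebra_simps)
      then show ?thesis using pos ss by simp
    qed
  qed
  have injq: "inj q" unfolding q_def
    by (metis injI injp inj_eq emono linorder_neqE_nat less_irrefl)
  have "range q \<subseteq> X" unfolding q_def using pX by auto
  moreover have "infinite (range q)" using injq by (rule range_inj_infinite)
  ultimately show ?thesis using ci by blast
qed

end
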